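(* Let $Q$ and $W$ satisfy the standing assumptions with $W=Y$, and let $l\ge1$. Then $\mathcal B(\hat Q^{l\triangledown})\subseteq\hat{\mathcal B}^l$.
   Context: Strings and signals: $\diamond$ is a symbol not in any other set considered. For a set $A$ and $l\in\mathbb N_0$, $A^l$ is the set of strings of length $l$ over $A$, indexed $\zeta=\zeta(0)\cdots\zeta(l-1)$. For a map $w$ on $\mathbb Z$ (or a string) and integers $t_1\le t_2$, $w|_{[t_1,t_2]}=w(t_1)\cdots w(t_2)$ is the string of length $t_2-t_1+1$ (absolute time forgotten). For a set $\mathcal S$ of such maps, $\mathcal S|_{[t_1,t_2]}=\{s|_{[t_1,t_2]}:s\in\mathcal S\}$. State machines: a state machine is $Q=(X,U,Y,\delta,X_0)$ with $X_0\subseteq X$, $\delta\subseteq X\times U\times Y\times X$. Let $H_\delta(x)=\{y:\exists u,x'.\,(x,u,y,x')\in\delta\}$, $F_\delta(x,u)=\{x':\exists y\in H_\delta(x).\,(x,u,y,x')\in\delta\}$. The full behavior $\mathcal B_f(Q)$ is the set of $(\mu,\nu,\xi)\in(U\times Y\times X)^{\mathbb N_0}$ with $\xi(0)\in X_0$ and $(\xi(k),\mu(k),\nu(k),\xi(k+1))\in\delta$ for all $k\in\mathbb N_0$. $Q$ is live and reachable if every $x\in X_0$ is $\xi(0)$ for some $(\mu,\nu,\xi)\in\mathcal B_f(Q)$ and every $x\in X$ is $\xi(k)$ for some such trajectory and some $k$. Standing assumptions: $Q=(X,U,Y,\delta,X_0)$ is live and reachable and satisfies $(x,u,y,x')\in\delta\iff(x'\in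 F_\delta(x,u)\wedge y\in H_\delta(x))$ for all $x,x'\in X,u\in U,y\in Y$; the external signal space $W$ is finite and either $W=U\times Y$ or $W=Y$ (here $W=Y$, with $\pi_Y(u,y)=y$). Behaviors: for a state machine $Q'$ with input set $U$ and output set $Y$, $\mathcal B(Q')$ is the set of $w:\mathbb Z\to Y\cup\{\diamond\}$ such that for some $(\mu,\nu,\xi)\in\mathcal B_f(Q')$, $w(k)=\diamond$ for $k<0$ and $w(k)=\nu(k)$ for $k\ge0$. $\mathcal B_S(Q)$ is the set of pairs $(w,\xi)$ of maps on $\mathbb Z$ with $w(k)=\xi(k)=\diamond$ for $k<0$ and $(w(k),\xi(k))=(\nu(k),\xi'(k))$ for $k\ge0$, for some $(\mu,\nu,\xi')\in\mathcal B_f(Q)$. For a set $\mathcal B$ of maps on $\mathbb Z$, $\Pi_l(\mathcal B)=\bigcup_{k\in\mathbb N_0}\mathcal B|_{[k-l+1,k]}$. SAlCA: for $l\in\mathbb N_0$, $\hat{\mathcal B}^l$ is the set of $w:\mathbb Z\to W\cup\{\diamond\}$ with $w(k)=\diamond$ for $k<0$, $w(k)\in W$ for $k\ge0$, $w|_{[-l,0]}\in\mathcal B(Q)|_{[-l,0]}$ and $w|_{[k-l,k]}\in\Pi_{l+1}(\mathcal B(Q))$ for all $k\in\mathbb N_0$. Corresponding strings: for integers $a,b$ and $x\in X$, $E^{[a,b]}(x)=\{\zeta:\exists(w,\xi)\in\mathcal B_S(Q),k\in\mathbb N_0:\ \xi(k)=x,\ \zeta=w|_{[k+a,k+b]}\}$;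 $I^l_l=[0,l-1]$. Quotient state machine (for $W=Y$): $\hat Q^{l\triangledown}=(\hat X^{l\triangledown},U,Y,\hat\delta^{l\triangledown},\hat X^{l\triangledown}_0)$ with $\hat X^{l\triangledown}=\{E^{I^l_l}(x):x\in X\}$ (a set of subsets of $Y^l$), $\hat X^{l\triangledown}_0=\{E^{I^l_l}(x):x\in X_0\}$, and $(\hat x,u,y,\hat x')\in\hat\delta^{l\triangledown}$ iff there exist $x,x'\in X$ with $\hat x=E^{I^l_l}(x)$, $\hat x'=E^{I^l_l}(x')$ and $(x,u,y,x')\in\delta$. *)

theory Defs
  imports Main
begin

text \<open>State machine Q = (X,U,Y,delta,X0). The symbol diamond is encoded as None
  (maps on Z take values in 'a option, Some v standing for v).\<close>

record ('x, 'u, 'y) state_machine =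
  St   :: "'x set"
  Inp  :: "'u set"
  Out  :: "'y set"
  Tr   :: "('x \<times> 'u \<times> 'y \<times> 'x) set"
  Init :: "'x set"

definition is_state_machine :: "('x, 'u, 'y) state_machine \<Rightarrow> bool" where
  "is_state_machine Q \<longleftrightarrow> Init Q \<subseteq> St Q \<and> Tr Q \<subseteq> St Q \<times> Inp Q \<times> Out Q \<times> St Q"

definition H_of :: "('x, 'u, 'y) state_machine \<Rightarrow> 'x \<Rightarrow> 'y set" where
  "H_of Q x = {y. \<exists>u x'. (x, u, y, x') \<in> Tr Q}"

definition F_of :: "('x, 'u, 'y) state_machine \<Rightarrow> 'x \<Rightarrow> 'u \<Rightarrow> 'x set" where
  "F_of Q x u = {x'. \<exists>y \<in> H_of Q x. (x, u, y, x') \<in> Tr Q}"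

definition full_behavior ::
  "('x, 'u, 'y) state_machine \<Rightarrow> ((nat \<Rightarrow> 'u) \<times> (nat \<Rightarrow> 'y) \<times> (nat \<Rightarrow> 'x)) set" where
  "full_behavior Q = {(\<mu>, \<nu>, \<xi>).
     (\<forall>k. \<mu> k \<in> Inp Q \<and> \<nu> k \<in> Out Q \<and> \<xi> k \<in> St Q) \<and>
     \<xi> 0 \<in> Init Q \<and> (\<forall>k. (\<xi> k, \<mu> k, \<nu> k, \<xi> (Suc k)) \<in> Tr Q)}"

definition live_reachable :: "('x, 'u, 'y) state_machine \<Rightarrow> bool" where
  "live_reachable Q \<longleftrightarrow>
     (\<forall>x \<in> Init Q. \<exists>\<mu> \<nu> \<xi>. (\<mu>, \<nu>, \<xi>) \<in> full_behavior Q \<and> \<xi> 0 = x) \<and>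
     (\<forall>x \<in> St Q. \<exists>\<mu> \<nu> \<xi> k. (\<mu>, \<nu>, \<xi>) \<in> full_behavior Q \<and> \<xi> k = x)"

definition standing_assumptions :: "('x, 'u, 'y) state_machine \<Rightarrow> bool" where
  "standing_assumptions Q \<longleftrightarrow> is_state_machine Q \<and> live_reachable Q \<and>
     (\<forall>x \<in> St Q. \<forall>x' \<in> St Q. \<forall>u \<in> Inp Q. \<forall>y \<in> Out Q.
        (x, u, y, x') \<in> Tr Q \<longleftrightarrow> (x' \<in> F_of Q x u \<and> y \<in> H_of Q x)) \<and>
     finite (Out Q)"

definition restr :: "(int \<Rightarrow> 'a) \<Rightarrow> int \<Rightarrow> int \<Rightarrow> 'a list" where
  "restr w t1 t2 = map w [t1..t2]"

definition restr_set :: "(int \<Rightarrow> 'a) set \<Rightarrow> int \<Rightarrow> int \<Rightarrow> 'a list set" where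
  "restr_set S t1 t2 = (\<lambda>s. restr s t1 t2) ` S"

definition behavior :: "('x, 'u, 'y) state_machine \<Rightarrow> (int \<Rightarrow> 'y option) set" where
  "behavior Q = {w. \<exists>\<mu> \<nu> \<xi>. (\<mu>, \<nu>, \<xi>) \<in> full_behavior Q \<and>
       (\<forall>k. w k = (if k < 0 then None else Some (\<nu> (nat k))))}"

definition behavior_S :: "('x, 'u, 'y) state_machine \<Rightarrow> ((int \<Rightarrow> 'y option) \<times> (int \<Rightarrow> 'x option)) set" where
  "behavior_S Q = {(w, \<xi>). \<exists>\<mu> \<nu> \<xi>'. (\<mu>, \<nu>, \<xi>') \<in> full_behavior Q \<and>
       (\<forall>k. w k = (if k < 0 then None else Some (\<nu> (nat k))) \<and>
            \<xi> k = (if k < 0 then None else Some (\<xi>' (nat k))))}"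

definition Pi_l :: "nat \<Rightarrow> (int \<Rightarrow> 'a) set \<Rightarrow> 'a list set" where
  "Pi_l l B = (\<Union>k::nat. restr_set B (int k - int l + 1) (int k))"

definition salca :: "('x, 'u, 'y) state_machine \<Rightarrow> nat \<Rightarrow> (int \<Rightarrow> 'y option) set" where
  "salca Q l = {w. (\<forall>k < 0. w k = None) \<and> (\<forall>k \<ge> 0. w k \<in> Some ` Out Q) \<and>
       restr w (- int l) 0 \<in> restr_set (behavior Q) (- int l) 0 \<and>
       (\<forall>k::nat. restr w (int k - int l) (int k) \<in> Pi_l (l + 1) (behavior Q))}"

definition E_str :: "('x, 'u, 'y) state_machine \<Rightarrow> int \<Rightarrow> int \<Rightarrow> 'x \<Rightarrow> 'y option list set" where
  "E_str Q a b x = {\<zeta>. \<exists>w \<xi> k. (w, \<xi>) \<in> behavior_S Q \<and> \<xi> (int k) = Some x \<and>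
        \<zeta> = restr w (int k + a) (int k + b)}"

definition E_l :: "('x, 'u, 'y) state_machine \<Rightarrow> nat \<Rightarrow> 'x \<Rightarrow> 'y option list set" where
  "E_l Q l x = E_str Q 0 (int l - 1) x"

definition quotient_sm ::
  "('x, 'u, 'y) state_machine \<Rightarrow> nat \<Rightarrow> ('y option list set, 'u, 'y) state_machine" where
  "quotient_sm Q l = \<lparr> St = E_l Q l ` St Q, Inp = Inp Q, Out = Out Q,
     Tr = {(xh, u, y, xh'). \<exists>x \<in> St Q. \<exists>x' \<in> St Q.
             xh = E_l Q l x \<and> xh' = E_l Q l x' \<and> (x, u, y, x') \<in> Tr Q},
     Init = E_l Q l ` Init Q \<rparr>"

end

theory Submission
  imports Defs
begin

lemma restr_length: "length (restr f a b) = nat (b - a + 1)"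
  by (simp add: restr_def)

lemma restr_nth: "i < nat (b - a + 1) \<Longrightarrow> restr f a b ! i = f (a + int i)"
  by (simp add: restr_def nth_upto)

lemma restr_eqI:
  assumes "b - a = d - c" "\<And>m. 0 \<le> m \<Longrightarrow> m \<le> b - a \<Longrightarrow> f (a+m) = g (c+m)"
  shows "restr f a b = restr g c d"
proof (rule nth_equalityI)
  show "length (restr f a b) = length (restr g c d)" using assms(1) by (simp add: restr_length)
next
  fix i assume "i < length (restr f a b)"
  hence i: "i < nat (b - a + 1)" by (simp add: restr_length)
  hence i2: "i < nat (d - c + 1)" using assms(1) by simp
  have "int i \<le> b - a" using i by linarith
  thus "restr f a b ! i = restr g c d ! i"
    using restr_nth[OF i, of f] restr_nth[OF i2, of g] assms(2)[of "int i"] by simp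
qed

definition realizes where
  "realizes Q \<mu> \<nu> \<xi> t x s \<longleftrightarrow> (\<mu>, \<nu>, \<xi>) \<in> full_behavior Q \<and> \<xi> t = x \<and>
     (\<forall>m<length s. \<nu> (t+m) = s!m)"

lemma lemA:
  assumes r: "realizes Q \<mu> \<nu> \<xi> t x s" and len: "length s \<le> l"
    and E: "E_l Q l x = E_l Q l z"
  shows "\<exists>\<mu>' \<nu>' \<xi>' t'. realizes Q \<mu>' \<nu>' \<xi>' t' z s"
proof -
  define w where "w = (\<lambda>k::int. if k < 0 then None else Some (\<nu> (nat k)))"
  define xo where "xo = (\<lambda>k::int. if k < 0 then None else Some (\<xi> (nat k)))"
  have fb: "(\<mu>, \<nu>, \<xi>) \<in> full_behavior Q" and xt: "\<xi> t = x"
    and sv: "\<forall>m<length s. \<nu> (t+m) = s!m" using r by (auto simp: realizes_def)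
  have "(w, xo) \<in> behavior_S Q" unfolding behavior_S_def w_def xo_def using fb by blast
  moreover have "xo (int t) = Some x" using xt by (simp add: xo_def)
  ultimately have "restr w (int t + 0) (int t + (int l - 1)) \<in> E_l Q l x"
    unfolding E_l_def E_str_def by blast
  hence "restr w (int t + 0) (int t + (int l - 1)) \<in> E_l Q l z" using E by simp
  then obtain w2 x2 k where b2: "(w2, x2) \<in> behavior_S Q" and x2k: "x2 (int k) = Some z"
    and eq: "restr w (int t + 0) (int t + (int l - 1)) = restr w2 (int k + 0) (int k + (int l - 1))"
    unfolding E_l_def E_str_def by blast
  from b2 obtain \<mu>2 \<nu>2 \<xi>2 where fb2: "(\<mu>2, \<nu>2, \<xi>2) \<in> full_behavior Q"
    and hw: "\<forall>k. w2 k = (if k < 0 then None else Some (\<nu>2 (nat k))) \<and>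
            x2 k = (if k < 0 then None else Some (\<xi>2 (nat k)))"
    unfolding behavior_S_def by blast
  have zk: "\<xi>2 k = z" using hw x2k by (metis nat_int of_nat_less_0_iff option.inject)
  have "\<forall>m<length s. \<nu>2 (k+m) = s!m"
  proof (intro allI impI)
    fix m assume m: "m < length s"
    have mi: "m < nat (int t + (int l - 1) - (int t + 0) + 1)" using m len by linarith
    have mi2: "m < nat (int k + (int l - 1) - (int k + 0) + 1)" using m len by linarith
    have "restr w (int t + 0) (int t + (int l - 1)) ! m = Some (\<nu> (t+m))"
      using restr_nth[OF mi, of w] by (simp add: w_def nat_add_distrib)
    moreover have "restr w2 (int k + 0) (int k + (int l - 1)) ! m = Some (\<nu>2 (k+m))"
      using restr_nth[OF mi2, of w2] hw by (simp add: nat_add_distrib)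
    ultimately show "\<nu>2 (k+m) = s!m" using eq sv m by simp
  qed
  thus ?thesis using fb2 zk unfolding realizes_def by blast
qed

lemma lemB:
  assumes sa: "standing_assumptions Q" and r: "realizes Q \<mu> \<nu> \<xi> j x' s"
    and tr: "(x, u, y, x') \<in> Tr Q" and xs: "x \<in> St Q"
  shows "\<exists>\<mu>' \<nu>' \<xi>' t'. realizes Q \<mu>' \<nu>' \<xi>' t' x (y # s)"
proof -
  have sm: "is_state_machine Q" and lr: "live_reachable Q" using sa by (auto simp: standing_assumptions_def)
  obtain \<mu>A \<nu>A \<xi>A t where fA: "(\<mu>A, \<nu>A, \<xi>A) \<in> full_behavior Q" and xA: "\<xi>A t = x"
    using lr xs unfolding live_reachable_def by blast
  have fb: "(\<mu>, \<nu>, \<xi>) \<in> full_behavior Q" and xj: "\<xi> j = x'"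
    and sv: "\<forall>m<length s. \<nu> (j+m) = s!m" using r by (auto simp: realizes_def)
  have trs: "u \<in> Inp Q" "y \<in> Out Q" using tr sm by (auto simp: is_state_machine_def)
  define \<mu>N where "\<mu>N = (\<lambda>n. if n < t then \<mu>A n else if n = t then u else \<mu> (n - t - 1 + j))"
  define \<nu>N where "\<nu>N = (\<lambda>n. if n < t then \<nu>A n else if n = t then y else \<nu> (n - t - 1 + j))"
  define \<xi>N where "\<xi>N = (\<lambda>n. if n \<le> t then \<xi>A n else \<xi> (n - t - 1 + j))"
  have A: "\<forall>k. \<mu>A k \<in> Inp Q \<and> \<nu>A k \<in> Out Q \<and> \<xi>A k \<in> St Q" "\<xi>A 0 \<in> Init Q"
    "\<forall>k. (\<xi>A k, \<mu>A k, \<nu>A k, \<xi>A (Suc k)) \<in> Tr Q" using fA by (auto simp: full_behavior_def)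
  have B: "\<forall>k. \<mu> k \<in> Inp Q \<and> \<nu> k \<in> Out Q \<and> \<xi> k \<in> St Q"
    "\<forall>k. (\<xi> k, \<mu> k, \<nu> k, \<xi> (Suc k)) \<in> Tr Q" using fb by (auto simp: full_behavior_def)
  have "(\<mu>N, \<nu>N, \<xi>N) \<in> full_behavior Q"
    unfolding full_behavior_def
  proof (clarsimp, intro conjI allI)
    fix k
    show "\<mu>N k \<in> Inp Q" using A B trs by (simp add: \<mu>N_def)
    show "\<nu>N k \<in> Out Q" using A B trs by (simp add: \<nu>N_def)
    show "\<xi>N k \<in> St Q" using A B by (simp add: \<xi>N_def)
    show "(\<xi>N k, \<mu>N k, \<nu>N k, \<xi>N (Suc k)) \<in> Tr Q"
    proof -
      consider "k < t" | "k = t" | "k > t" by linarith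
      thus ?thesis
      proof cases
        case 1 thus ?thesis using A(3) by (simp add: \<xi>N_def \<mu>N_def \<nu>N_def)
      next
        case 2 thus ?thesis using tr xA xj by (simp add: \<xi>N_def \<mu>N_def \<nu>N_def)
      next
        case 3
        hence "Suc k - t - 1 + j = Suc (k - t - 1 + j)" by simp
        thus ?thesis using 3 B(2) by (simp add: \<xi>N_def \<mu>N_def \<nu>N_def)
      qed
    qed
  next
    show "\<xi>N 0 \<in> Init Q" using A(2) by (simp add: \<xi>N_def)
  qed
  moreover have "\<xi>N t = x" using xA by (simp add: \<xi>N_def)
  moreover have "\<forall>m<length (y#s). \<nu>N (t+m) = (y#s)!m"
  proof (intro allI impI)
    fix m assume m: "m < length (y#s)"
    show "\<nu>N (t+m) = (y#s)!m"
    proof (cases m)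
      case 0 thus ?thesis by (simp add: \<nu>N_def)
    next
      case (Suc m')
      thus ?thesis using m sv by (simp add: \<nu>N_def add.commute[of _ j])
    qed
  qed
  ultimately show ?thesis unfolding realizes_def by blast
qed

lemma shift:
  assumes r: "realizes Q \<mu> \<nu> \<xi> t x s" and x0: "x \<in> Init Q"
  shows "\<exists>\<mu>' \<nu>' \<xi>'. (\<mu>', \<nu>', \<xi>') \<in> full_behavior Q \<and> (\<forall>m<length s. \<nu>' m = s!m)"
proof -
  have fb: "(\<mu>, \<nu>, \<xi>) \<in> full_behavior Q" and xt: "\<xi> t = x"
    and sv: "\<forall>m<length s. \<nu> (t+m) = s!m" using r by (auto simp: realizes_def)
  have "(\<lambda>n. \<mu> (t+n), \<lambda>n. \<nu> (t+n), \<lambda>n. \<xi> (t+n)) \<in> full_behavior Q"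
    using fb xt x0 by (auto simp: full_behavior_def)
  thus ?thesis using sv by blast
qed

theorem theorem8:
  fixes Q :: "('x, 'u, 'y) state_machine" and l :: nat
  assumes "standing_assumptions Q" and "l \<ge> 1"
  shows "behavior (quotient_sm Q l) \<subseteq> salca Q l"
proof
  fix w assume "w \<in> behavior (quotient_sm Q l)"
  then obtain \<mu> \<nu> \<xi>h where fq: "(\<mu>, \<nu>, \<xi>h) \<in> full_behavior (quotient_sm Q l)"
    and hw: "\<forall>k. w k = (if k < 0 then None else Some (\<nu> (nat k)))"
    unfolding behavior_def by blast
  have sa: "standing_assumptions Q" by fact
  have lr: "live_reachable Q" using sa by (auto simp: standing_assumptions_def)
  have nuO: "\<forall>k. \<nu> k \<in> Out Q" and xhS: "\<forall>k. \<xi>h k \<in> E_l Q l ` St Q"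
    and xh0: "\<xi>h 0 \<in> E_l Q l ` Init Q"
    and trq: "\<forall>k. \<exists>x\<in>St Q. \<exists>x'\<in>St Q. \<xi>h k = E_l Q l x \<and> \<xi>h (Suc k) = E_l Q l x' \<and>
          (x, \<mu> k, \<nu> k, x') \<in> Tr Q"
    using fq by (auto simp: full_behavior_def quotient_sm_def)
  have step: "\<exists>x\<in>St Q. \<xi>h i = E_l Q l x \<and> (\<exists>\<mu>' \<nu>' \<xi>' t. realizes Q \<mu>' \<nu>' \<xi>' t x (map (\<lambda>m. \<nu> (i+m)) [0..<Suc n]))"
    if IH: "\<exists>x\<in>St Q. \<xi>h (Suc i) = E_l Q l x \<and> (\<exists>\<mu>' \<nu>' \<xi>' t. realizes Q \<mu>' \<nu>' \<xi>' t x (map (\<lambda>m. \<nu> (Suc i+m)) [0..<n]))"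
      and nl: "n \<le> l" for i n
  proof -
    obtain xi xi' where xi: "xi \<in> St Q" "xi' \<in> St Q" "\<xi>h i = E_l Q l xi" "\<xi>h (Suc i) = E_l Q l xi'"
      "(xi, \<mu> i, \<nu> i, xi') \<in> Tr Q" using trq by blast
    from IH obtain x \<mu>' \<nu>' \<xi>' t where "\<xi>h (Suc i) = E_l Q l x"
      and r: "realizes Q \<mu>' \<nu>' \<xi>' t x (map (\<lambda>m. \<nu> (Suc i+m)) [0..<n])" by blast
    hence "E_l Q l x = E_l Q l xi'" using xi by simp
    then obtain \<mu>2 \<nu>2 \<xi>2 t2 where "realizes Q \<mu>2 \<nu>2 \<xi>2 t2 xi' (map (\<lambda>m. \<nu> (Suc i+m)) [0..<n])"
      using lemA[OF r _] nl by fastforce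
    from lemB[OF sa this xi(5) xi(1)] obtain \<mu>3 \<nu>3 \<xi>3 t3 where
      "realizes Q \<mu>3 \<nu>3 \<xi>3 t3 xi (\<nu> i # map (\<lambda>m. \<nu> (Suc i+m)) [0..<n])" by blast
    moreover have "map (\<lambda>m. \<nu> (i+m)) [0..<Suc n] = \<nu> i # map (\<lambda>m. \<nu> (Suc i+m)) [0..<n]"
      by (simp add: map_upt_Suc del: upt_Suc)
    ultimately show ?thesis using xi by metis
  qed
  have main: "\<forall>i. \<exists>x\<in>St Q. \<xi>h i = E_l Q l x \<and> (\<exists>\<mu>' \<nu>' \<xi>' t. realizes Q \<mu>' \<nu>' \<xi>' t x (map (\<lambda>m. \<nu> (i+m)) [0..<n]))"
    if "n \<le> l" for n
    using that
  proof (induction n)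
    case 0
    show ?case
    proof
      fix i
      obtain x where x: "x \<in> St Q" "\<xi>h i = E_l Q l x" using xhS by blast
      then obtain \<mu>' \<nu>' \<xi>' k where "(\<mu>', \<nu>', \<xi>') \<in> full_behavior Q" "\<xi>' k = x"
        using lr unfolding live_reachable_def by blast
      hence "realizes Q \<mu>' \<nu>' \<xi>' k x []" by (simp add: realizes_def)
      thus "\<exists>x\<in>St Q. \<xi>h i = E_l Q l x \<and> (\<exists>\<mu>' \<nu>' \<xi>' t. realizes Q \<mu>' \<nu>' \<xi>' t x (map (\<lambda>m. \<nu> (i+m)) [0..<0]))"
        using x by (metis list.simps(8) upt_0)
    qed
  next
    case (Suc n)
    hence "\<forall>i. \<exists>x\<in>St Q. \<xi>h i = E_l Q l x \<and> (\<exists>\<mu>' \<nu>' \<xi>' t. realizes Q \<mu>' \<nu>' \<xi>' t x (map (\<lambda>m. \<nu> (i+m)) [0..<n]))" by simp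
    hence IHn: "\<And>i. \<exists>x\<in>St Q. \<xi>h i = E_l Q l x \<and> (\<exists>\<mu>' \<nu>' \<xi>' t. realizes Q \<mu>' \<nu>' \<xi>' t x (map (\<lambda>m. \<nu> (i+m)) [0..<n]))" by blast
    show ?case
    proof
      fix i
      have nl: "n \<le> l" using Suc.prems by simp
      have "\<exists>x\<in>St Q. \<xi>h (Suc i) = E_l Q l x \<and> (\<exists>\<mu>' \<nu>' \<xi>' t. realizes Q \<mu>' \<nu>' \<xi>' t x (map (\<lambda>m. \<nu> (Suc i+m)) [0..<n]))"
        using IHn[of "Suc i"] by simp
      from step[OF this nl] show "\<exists>x\<in>St Q. \<xi>h i = E_l Q l x \<and> (\<exists>\<mu>' \<nu>' \<xi>' t. realizes Q \<mu>' \<nu>' \<xi>' t x (map (\<lambda>m. \<nu> (i+m)) [0..<Suc n]))" .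
    qed
  qed
  have long: "\<exists>\<mu>' \<nu>' \<xi>' t x. realizes Q \<mu>' \<nu>' \<xi>' t x (map (\<lambda>m. \<nu> (i+m)) [0..<Suc l])" for i
    using step[of i l] main[of l] by blast
  obtain x0 where x0: "x0 \<in> Init Q" "\<xi>h 0 = E_l Q l x0" using xh0 by blast
  obtain x \<mu>' \<nu>' \<xi>' t where "\<xi>h 0 = E_l Q l x"
      and r: "realizes Q \<mu>' \<nu>' \<xi>' t x (map (\<lambda>m. \<nu> (0+m)) [0..<l])"
    using main[of l] by blast
  hence "E_l Q l x = E_l Q l x0" using x0 by simp
  then obtain \<mu>2 \<nu>2 \<xi>2 t2 where "realizes Q \<mu>2 \<nu>2 \<xi>2 t2 x0 (map (\<lambda>m. \<nu> (0+m)) [0..<l])"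
    using lemA[OF r] by fastforce
  from shift[OF this x0(1)] obtain \<mu>0 \<nu>0 \<xi>0 where f0: "(\<mu>0, \<nu>0, \<xi>0) \<in> full_behavior Q"
    and v0: "\<forall>m<l. \<nu>0 m = \<nu> m" by auto
  define b0 where "b0 = (\<lambda>k::int. if k < 0 then None else Some (\<nu>0 (nat k)))"
  have b0B: "b0 \<in> behavior Q" unfolding behavior_def b0_def using f0 by blast
  show "w \<in> salca Q l"
    unfolding salca_def
  proof (clarsimp, intro conjI allI impI)
    fix k :: int assume "k < 0" thus "w k = None" using hw by simp
  next
    fix k :: int assume "0 \<le> k" thus "w k \<in> Some ` Out Q" using hw nuO by simp
  next
    have "restr w (- int l) 0 = restr b0 (- int l) 0"
      by (rule restr_eqI) (use hw v0 assms(2) in \<open>auto simp: b0_def\<close>)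
    thus "restr w (- int l) 0 \<in> restr_set (behavior Q) (- int l) 0"
      using b0B unfolding restr_set_def by blast
  next
    fix k :: nat
    show "restr w (int k - int l) (int k) \<in> Pi_l (Suc l) (behavior Q)"
    proof (cases "k < l")
      case True
      have "restr w (int k - int l) (int k) = restr b0 (int k - int (Suc l) + 1) (int k)"
      proof (rule restr_eqI)
        fix m assume "0 \<le> m" "m \<le> int k - (int k - int l)"
        thus "w (int k - int l + m) = b0 (int k - int (Suc l) + 1 + m)"
          using hw v0 True by (auto simp: b0_def)
      qed simp
      thus ?thesis using b0B unfolding Pi_l_def restr_set_def by blast
    next
      case False
      obtain \<mu>1 \<nu>1 \<xi>1 t x where r1: "realizes Q \<mu>1 \<nu>1 \<xi>1 t x (map (\<lambda>m. \<nu> ((k-l)+m)) [0..<Suc l])"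
        using long by blast
      define b1 where "b1 = (\<lambda>k::int. if k < 0 then None else Some (\<nu>1 (nat k)))"
      have b1B: "b1 \<in> behavior Q" unfolding behavior_def b1_def using r1 by (auto simp: realizes_def)
      have sv: "\<forall>m\<le>l. \<nu>1 (t+m) = \<nu> (k-l+m)"
      proof (intro allI impI)
        fix m assume "m \<le> l"
        hence "m < length (map (\<lambda>m. \<nu> ((k-l)+m)) [0..<Suc l])" by simp
        hence "\<nu>1 (t+m) = map (\<lambda>m. \<nu> ((k-l)+m)) [0..<Suc l] ! m" using r1 unfolding realizes_def by blast
        thus "\<nu>1 (t+m) = \<nu> (k-l+m)" using \<open>m \<le> l\<close> by (simp del: upt_Suc)
      qed
      have "restr w (int k - int l) (int k) = restr b1 (int (t+l) - int (Suc l) + 1) (int (t+l))"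
      proof (rule restr_eqI)
        fix m assume m: "0 \<le> m" "m \<le> int k - (int k - int l)"
        hence "nat m \<le> l" by simp
        hence "\<nu>1 (t + nat m) = \<nu> (k-l+nat m)" using sv by blast
        moreover have "nat (int k - int l + m) = k - l + nat m" using m False by simp
        moreover have "nat (int (t+l) - int (Suc l) + 1 + m) = t + nat m" using m by simp
        ultimately show "w (int k - int l + m) = b1 (int (t+l) - int (Suc l) + 1 + m)"
          using hw m False by (simp add: b1_def)
      qed simp
      thus ?thesis using b1B unfolding Pi_l_def restr_set_def by blast
    qed
  qed
qed

end
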